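(* Let $\tilde A\in\widetilde{SL}(2,\mathbb R)$, let $a\in\mathbb R$, let $b:=\tilde A(a)$, so that $I:=[a,b)$ is a fundamental domain of $\mathbb R/\langle\tilde A\rangle$, and let $W(I)$ denote the winding number of $(a,b)$. Then: (1) if $\tilde A$ is conjugate to $\tilde E_\alpha$ with $\alpha>0$, then $W(I)=n$ if and only if $\alpha=n\pi$, and otherwise $W(I)=n+\frac12$, where $n\pi<\alpha<(n+1)\pi$; (2) if $\tilde A$ is conjugate to $\tilde P^+_n$, respectively $\tilde P^-_n$, with $n\in\mathbb N^*$, then $n-\frac12\le W(I)\le n$, respectively $n\le W(I)\le n+\frac12$; (3) if $\tilde A$ is conjugate to $\tilde H_n(\lambda)$ with $\lambda>1$ and $n\in\mathbb N^*$, then $n-\frac12\le W(I)\le n+\frac12$. In cases (2) and (3), $W(I)$ is an integer if and only if $\pi(a)\in\mathbb{RP}^1$ is a fixed point of the projection $\hat A\in PSL(2,\mathbb R)$ of $\tilde A$. Moreover, the bounds in the inequalities above are attained (for suitable $a$).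
   Context: Let $\pi:\mathbb R\to\mathbb{RP}^1$, $\pi(t)=[\cos t:\sin t]$, $\bar\pi(t)=(\cos t,\sin t)\in S^1$; $SL(2,\mathbb R)$ acts on $S^1$ by $A\cdot v=Av/\|Av\|$ and $PSL(2,\mathbb R)$ on $\mathbb{RP}^1$ by homographies. $\widetilde{SL}(2,\mathbb R)$ is the group of diffeomorphisms $\tilde A$ of $\mathbb R$ with $\bar\pi\circ\tilde A=A\cdot\bar\pi$ for some $A\in SL(2,\mathbb R)$; its projection $\hat A\in PSL(2,\mathbb R)$ is the class of $A$, and $\pi\circ\tilde A=\hat A\circ\pi$. $\tilde E_\alpha(x)=x+\alpha$. For $\hat A\in PSL(2,\mathbb R)$ with a fixed point in $\mathbb{RP}^1$, its canonical lift $\tilde A_0$ is the unique lift having a fixed point in $\mathbb R$. With $P^\pm=\begin{pmatrix}1&\pm1\\0&1\end{pmatrix}$ and $H(\lambda)=\begin{pmatrix}\lambda&0\\0&\lambda^{-1}\end{pmatrix}$ ($\lambda>0$, $\lambda\ne1$), let $\tilde P^\pm_0$, $\tilde H_0(\lambda)$ be the canonical lifts of their classes and $\tilde P^\pm_n:=\tilde P^\pm_0\tilde E_{n\pi}$, $\tilde H_n(\lambda):=\tilde H_0(\lambda)\tilde E_{n\pi}$. Conjugacy is in $\widetilde{SL}(2,\mathbb R)$. Winding number: for $a<b$, $W((a,b))=k$ if $b=a+k\pi$, $k\in\mathbb N$, and $W((a,b))=k+\frac12$ if $a+k\pi<b<a+(k+1)\pi$, $k\in\mathbb N$. *)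

theory Defs
  imports "HOL-Analysis.Analysis"
begin

type_synonym mat2 = "real^2^2"

definition pibar :: "real \<Rightarrow> real^2" where
  "pibar t = vector [cos t, sin t]"

definition sl_act :: "mat2 \<Rightarrow> real^2 \<Rightarrow> real^2" where
  "sl_act M v = (1 / norm (M *v v)) *\<^sub>R (M *v v)"

definition diffeo :: "(real \<Rightarrow> real) \<Rightarrow> bool" where
  "diffeo g \<longleftrightarrow> bij g \<and> (\<forall>x. g differentiable (at x)) \<and> (\<forall>x. inv g differentiable (at x))"

definition lift_of :: "mat2 \<Rightarrow> (real \<Rightarrow> real) \<Rightarrow> bool" where
  "lift_of M g \<longleftrightarrow> det M = 1 \<and> (\<forall>t. pibar (g t) = sl_act M (pibar t))"

definition SLtilde :: "(real \<Rightarrow> real) set" where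
  "SLtilde = {g. diffeo g \<and> (\<exists>M. lift_of M g)}"

definition conjugate :: "(real \<Rightarrow> real) \<Rightarrow> (real \<Rightarrow> real) \<Rightarrow> bool" where
  "conjugate f h \<longleftrightarrow> (\<exists>g\<in>SLtilde. f = g \<circ> h \<circ> inv g)"

definition Etr :: "real \<Rightarrow> real \<Rightarrow> real" where
  "Etr \<alpha> x = x + \<alpha>"

text \<open>g is the canonical lift of the class of M in PSL(2,R): an element of
  the universal cover projecting to the class of M (i.e. lifting M or -M)
  and having a fixed point in R.\<close>
definition canonical_lift :: "mat2 \<Rightarrow> (real \<Rightarrow> real) \<Rightarrow> bool" where
  "canonical_lift M g \<longleftrightarrow> g \<in> SLtilde \<and> (lift_of M g \<or> lift_of (- M) g) \<and> (\<exists>x. g x = x)"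

definition Pplus :: mat2 where "Pplus = vector [vector [1, 1], vector [0, 1]]"
definition Pminus :: mat2 where "Pminus = vector [vector [1, -1], vector [0, 1]]"
definition Hmat :: "real \<Rightarrow> mat2" where "Hmat l = vector [vector [l, 0], vector [0, 1 / l]]"

definition rp_fixed :: "mat2 \<Rightarrow> real \<Rightarrow> bool" where
  "rp_fixed M t \<longleftrightarrow> (\<exists>c::real. M *v pibar t = c *\<^sub>R pibar t)"

definition winding :: "real \<Rightarrow> real \<Rightarrow> real" where
  "winding a b = (if \<exists>k::nat. b = a + real k * pi
     then real (THE k::nat. b = a + real k * pi)
     else real (THE k::nat. a + real k * pi < b \<and> b < a + real (k + 1) * pi) + 1/2)"

end

theory Submission
  imports Defs
begin

lemma pibar_comp[simp]: "pibar t $ 1 = cos t" "pibar t $ 2 = sin t"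
  by (simp_all add: pibar_def vector_2)

lemma mv_comp: "(M *v v) $ 1 = M$1$1 * v$1 + M$1$2 * v$2"
  "(M *v v) $ 2 = M$2$1 * v$1 + M$2$2 * v$2"
  for M :: mat2
  by (simp_all add: matrix_vector_mult_def sum_2)

lemma lift_comp:
  assumes "lift_of M g"
  shows "norm (M *v pibar t) > 0 \<and>
    norm (M *v pibar t) * cos (g t) = M$1$1 * cos t + M$1$2 * sin t \<and>
    norm (M *v pibar t) * sin (g t) = M$2$1 * cos t + M$2$2 * sin t"
proof -
  let ?v = "M *v pibar t"
  have d: "M$1$1 * M$2$2 - M$1$2 * M$2$1 = 1" using assms by (simp add: lift_of_def det_2)
  have "?v \<noteq> 0"
  proof
    assume "?v = 0"
    then have e1: "M$1$1 * cos t + M$1$2 * sin t = 0" and e2: "M$2$1 * cos t + M$2$2 * sin t = 0"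
      using mv_comp[of M "pibar t"] by (auto simp: vec_eq_iff)
    have "cos t = M$2$2 * (M$1$1 * cos t + M$1$2 * sin t) - M$1$2 * (M$2$1 * cos t + M$2$2 * sin t)"
      using d by algebra
    then have c: "cos t = 0" using e1 e2 by simp
    have "sin t = M$1$1 * (M$2$1 * cos t + M$2$2 * sin t) - M$2$1 * (M$1$1 * cos t + M$1$2 * sin t)"
      using d by algebra
    then have "sin t = 0" using e1 e2 by simp
    with c show False using sin_cos_squared_add[of t] by simp
  qed
  then have r: "norm ?v > 0" by simp
  have p: "pibar (g t) = (1 / norm ?v) *\<^sub>R ?v" using assms by (simp add: lift_of_def sl_act_def)
  have "cos (g t) = (1 / norm ?v) * ?v $ 1" using arg_cong[OF p, of "\<lambda>x. x $ 1"] by simp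
  moreover have "sin (g t) = (1 / norm ?v) * ?v $ 2" using arg_cong[OF p, of "\<lambda>x. x $ 2"] by simp
  ultimately show ?thesis using r by (simp add: mv_comp)
qed

lemma lift_sin_diff:
  assumes "lift_of M g"
  shows "\<exists>k>0. sin (g s - g t) = k * sin (s - t)"
proof -
  have d: "M$1$1 * M$2$2 - M$1$2 * M$2$1 = 1" using assms by (simp add: lift_of_def det_2)
  obtain rs where rs: "rs > 0" "rs * cos (g s) = M$1$1 * cos s + M$1$2 * sin s"
     "rs * sin (g s) = M$2$1 * cos s + M$2$2 * sin s" using lift_comp[OF assms, of s] by blast
  obtain rt where rt: "rt > 0" "rt * cos (g t) = M$1$1 * cos t + M$1$2 * sin t"
     "rt * sin (g t) = M$2$1 * cos t + M$2$2 * sin t" using lift_comp[OF assms, of t] by blast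
  have "(rs * rt) * sin (g s - g t) = (rs * sin (g s)) * (rt * cos (g t)) - (rs * cos (g s)) * (rt * sin (g t))"
    by (simp add: sin_diff algebra_simps)
  also have "\<dots> = (M$1$1 * M$2$2 - M$1$2 * M$2$1) * sin (s - t)"
    unfolding rs rt by (simp add: sin_diff algebra_simps)
  finally have "sin (g s - g t) = (1 / (rs * rt)) * sin (s - t)" using d rs rt
    by (simp add: field_simps)
  then show ?thesis using rs rt by (intro exI[of _ "1/(rs*rt)"]) simp
qed

lemma lift_sin_self:
  assumes "lift_of M g"
  shows "\<exists>k>0. sin (g t - t) = k * (M$2$1 * (cos t)^2 + (M$2$2 - M$1$1) * cos t * sin t - M$1$2 * (sin t)^2)"
proof -
  obtain rt where rt: "rt > 0" "rt * cos (g t) = M$1$1 * cos t + M$1$2 * sin t"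
     "rt * sin (g t) = M$2$1 * cos t + M$2$2 * sin t" using lift_comp[OF assms, of t] by blast
  have "rt * sin (g t - t) = (rt * sin (g t)) * cos t - (rt * cos (g t)) * sin t"
    by (simp add: sin_diff algebra_simps)
  also have "\<dots> = M$2$1 * (cos t)^2 + (M$2$2 - M$1$1) * cos t * sin t - M$1$2 * (sin t)^2"
    unfolding rt by (simp add: algebra_simps power2_eq_square)
  finally show ?thesis using rt by (intro exI[of _ "1/rt"]) (simp add: field_simps)
qed

lemma lift_shift_cos:
  assumes "lift_of M g"
  shows "cos (g (t + pi) - g t) = -1"
proof -
  have pm: "pibar (t + pi) = - pibar t" by (simp add: vec_eq_iff forall_2)
  have n: "norm (M *v pibar (t+pi)) = norm (M *v pibar t)" by (simp add: pm vec.neg)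
  obtain rt where rt: "rt > 0" "rt * cos (g t) = M$1$1 * cos t + M$1$2 * sin t"
     "rt * sin (g t) = M$2$1 * cos t + M$2$2 * sin t" "rt = norm (M *v pibar t)"
    using lift_comp[OF assms, of t] by blast
  have r2: "rt * cos (g (t+pi)) = - (M$1$1 * cos t + M$1$2 * sin t)"
     "rt * sin (g (t+pi)) = - (M$2$1 * cos t + M$2$2 * sin t)"
    using lift_comp[OF assms, of "t+pi"] n rt(4) by auto
  have "cos (g (t+pi)) = - cos (g t)" "sin (g (t+pi)) = - sin (g t)"
    using r2 rt by (metis mult_minus_right mult_cancel_left less_irrefl)+
  then have "cos (g (t + pi) - g t) = - ((sin (g t))^2 + (cos (g t))^2)"
    by (simp add: cos_diff power2_eq_square)
  then show ?thesis by simp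
qed

lemma slt_lift: "g \<in> SLtilde \<Longrightarrow> \<exists>M. lift_of M g"
  by (auto simp: SLtilde_def)

lemma slt_cont: assumes "g \<in> SLtilde" shows "continuous_on S g"
proof -
  have "\<forall>x. g differentiable (at x)" using assms by (auto simp: SLtilde_def diffeo_def)
  then have "\<forall>x. isCont g x" using differentiable_imp_continuous_within by blast
  then show ?thesis by (simp add: continuous_at_imp_continuous_on)
qed

lemma slt_bij: "g \<in> SLtilde \<Longrightarrow> bij g"
  by (auto simp: SLtilde_def diffeo_def)

lemma slt_range:
  assumes g: "g \<in> SLtilde" and ts: "t < s" "s < t + pi"
  shows "g t < g s \<and> g s < g t + pi"
proof -
  obtain M where L: "lift_of M g" using slt_lift[OF g] by blast
  have C: "continuous_on {t..s} g" using slt_cont[OF g] .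
  have pos: "sin (g u - g t) > 0" if "t < u" "u < t + pi" for u
  proof -
    obtain k where "k > 0" "sin (g u - g t) = k * sin (u - t)" using lift_sin_diff[OF L] by blast
    moreover have "sin (u - t) > 0" using that by (intro sin_gt_zero) auto
    ultimately show ?thesis by simp
  qed
  have A: "\<not> g s \<ge> g t + pi"
  proof
    assume "g s \<ge> g t + pi"
    then obtain u where u: "t \<le> u" "u \<le> s" "g u = g t + pi"
      using IVT'[of g t "g t + pi" s] C ts by auto
    have "u \<noteq> t" using u(3) pi_gt_zero by auto
    then have "sin (g u - g t) > 0" using u ts by (intro pos) auto
    then show False using u(3) by simp
  qed
  have B: "\<not> g s \<le> g t - pi/2"
  proof
    assume "g s \<le> g t - pi/2"
    then obtain u where u: "t \<le> u" "u \<le> s" "g u = g t - pi/2"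
      using IVT2'[of g s "g t - pi/2" t] C ts by auto
    have "u \<noteq> t" using u(3) pi_gt_zero by auto
    then have "sin (g u - g t) > 0" using u ts by (intro pos) auto
    then show False using u(3) by simp
  qed
  have D: "\<not> g s \<le> g t"
  proof
    assume a: "g s \<le> g t"
    with B have "g t - g s \<le> pi" by simp
    then have "sin (g t - g s) \<ge> 0" using a by (intro sin_ge_zero) auto
    moreover have "sin (g s - g t) > 0" using ts by (intro pos) auto
    moreover have "sin (g t - g s) = - sin (g s - g t)" by (metis minus_diff_eq sin_minus)
    ultimately show False by simp
  qed
  show ?thesis using A D by simp
qed

lemma slt_shift:
  assumes g: "g \<in> SLtilde"
  shows "g (t + pi) = g t + pi"
proof -
  obtain M where L: "lift_of M g" using slt_lift[OF g] by blast
  have C: "continuous_on {t..t+pi} g" using slt_cont[OF g] .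
  obtain m :: int where m: "g (t + pi) - g t = (2 * real_of_int m + 1) * pi"
    using lift_shift_cos[OF L, of t] cos_eq_minus1 by blast
  have "\<not> m \<ge> 1"
  proof
    assume "m \<ge> 1"
    then have "2 * real_of_int m + 1 \<ge> 3" by simp
    then have "(2 * real_of_int m + 1) * pi \<ge> 3 * pi" by (intro mult_right_mono) auto
    then have "g (t+pi) \<ge> g t + pi" using m pi_gt_zero by linarith
    then obtain u where u: "t \<le> u" "u \<le> t + pi" "g u = g t + pi"
      using IVT'[of g t "g t + pi" "t+pi"] C by auto
    have "u \<noteq> t" using u(3) pi_gt_zero by auto
    moreover have "u \<noteq> t + pi" using u(3) m \<open>(2 * real_of_int m + 1) * pi \<ge> 3 * pi\<close> pi_gt_zero by auto
    ultimately have "g u < g t + pi" using slt_range[OF g, of t u] u by auto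
    then show False using u by simp
  qed
  moreover have "\<not> m \<le> -1"
  proof
    assume "m \<le> -1"
    then have "2 * real_of_int m + 1 \<le> -1" by simp
    then have "(2 * real_of_int m + 1) * pi \<le> (-1) * pi" by (intro mult_right_mono) auto
    then have "g (t+pi) \<le> g t - pi/2" using m pi_gt_zero by linarith
    then obtain u where u: "t \<le> u" "u \<le> t + pi" "g u = g t - pi/2"
      using IVT2'[of g "t+pi" "g t - pi/2" t] C by auto
    have "u \<noteq> t" using u(3) pi_gt_zero by auto
    moreover have "u \<noteq> t + pi"
    proof
      assume "u = t + pi"
      then have "g (t+pi) = g t - pi/2" using u(3) by simp
      then show False using m \<open>(2 * real_of_int m + 1) * pi \<le> (-1) * pi\<close> pi_gt_zero by linarith
    qed
    ultimately have "g u > g t" using slt_range[OF g, of t u] u by auto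
    then show False using u pi_gt_zero by simp
  qed
  ultimately have "m = 0" by simp
  then show ?thesis using m by simp
qed

lemma slt_shift_nat:
  assumes g: "g \<in> SLtilde"
  shows "g (t + real k * pi) = g t + real k * pi"
proof (induction k)
  case 0 then show ?case by simp
next
  case (Suc k)
  have "g (t + real (Suc k) * pi) = g ((t + real k * pi) + pi)" by (simp add: algebra_simps)
  also have "\<dots> = g t + real (Suc k) * pi" using slt_shift[OF g, of "t + real k * pi"] Suc by (simp add: algebra_simps)
  finally show ?case .
qed

lemma slt_shift_int:
  assumes g: "g \<in> SLtilde"
  shows "g (t + real_of_int k * pi) = g t + real_of_int k * pi"
proof (cases "k \<ge> 0")
  case True
  then show ?thesis using slt_shift_nat[OF g, of t "nat k"] by simp
next
  case False
  have "g t = g ((t + real_of_int k * pi) + real (nat (-k)) * pi)" using False by simp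
  also have "\<dots> = g (t + real_of_int k * pi) + real (nat (-k)) * pi" by (rule slt_shift_nat[OF g])
  finally show ?thesis using False by simp
qed

lemma slt_between:
  assumes g: "g \<in> SLtilde" and "t + real k * pi < s" "s < t + real (k+1) * pi"
  shows "g t + real k * pi < g s \<and> g s < g t + real (k+1) * pi"
  using slt_range[OF g, of "t + real k * pi" s] assms slt_shift_nat[OF g, of t k]
  by (simp add: algebra_simps)

definition Qf :: "mat2 \<Rightarrow> real \<Rightarrow> real" where
  "Qf M t = M$2$1 * (cos t)^2 + (M$2$2 - M$1$1) * cos t * sin t - M$1$2 * (sin t)^2"

lemma Qf_neg: "Qf (- M) t = - Qf M t"
  by (simp add: Qf_def algebra_simps)

lemma lift_sinQ: "lift_of M g \<Longrightarrow> \<exists>k>0. sin (g t - t) = k * Qf M t"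
  unfolding Qf_def by (rule lift_sin_self)

lemma fixed_Q: assumes "lift_of M g" "g x = x" shows "Qf M x = 0"
  using lift_sinQ[OF assms(1), of x] assms(2) by auto

lemma no_neg:
  assumes L: "lift_of (- M) g" and fx: "g x = x" and c: "c > 0"
    and e1: "M$1$1 * cos x + M$1$2 * sin x = c * cos x"
    and e2: "M$2$1 * cos x + M$2$2 * sin x = c * sin x"
  shows False
proof -
  obtain r where r: "r > 0" "r * cos (g x) = (-M)$1$1 * cos x + (-M)$1$2 * sin x"
     "r * sin (g x) = (-M)$2$1 * cos x + (-M)$2$2 * sin x" using lift_comp[OF L, of x] by blast
  have "(r + c) * cos x = 0" using r(2) e1 fx by (simp add: algebra_simps)
  moreover have "(r + c) * sin x = 0" using r(3) e2 fx by (simp add: algebra_simps)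
  moreover have "r + c \<noteq> 0" using r c by simp
  ultimately show False using sin_cos_squared_add[of x] by simp
qed

lemma near_fixed:
  assumes g: "g \<in> SLtilde" and fx: "\<And>j::int. g (x0 + real_of_int j * d) = x0 + real_of_int j * d"
    and d: "0 < d" "d \<le> pi"
  shows "\<bar>g s - s\<bar> < d"
proof -
  define m where "m = \<lfloor>(s - x0) / d\<rfloor>"
  have "real_of_int m \<le> (s - x0) / d" unfolding m_def by simp
  then have m1: "x0 + real_of_int m * d \<le> s" using d by (simp add: field_simps)
  have "(s - x0) / d < real_of_int m + 1" unfolding m_def by linarith
  then have m2: "s < x0 + real_of_int (m+1) * d" using d by (simp add: field_simps)
  show ?thesis
  proof (cases "s = x0 + real_of_int m * d")
    case True then show ?thesis using fx[of m] d by simp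
  next
    case False
    with m1 have lt: "x0 + real_of_int m * d < s" by simp
    have "g (x0 + real_of_int m * d) < g s" using slt_range[OF g lt] m2 d
      by (simp add: algebra_simps)
    then have A: "x0 + real_of_int m * d < g s" using fx[of m] by simp
    have "g s < g (x0 + real_of_int (m+1) * d)" using slt_range[OF g m2] lt d
      by (simp add: algebra_simps)
    then have B: "g s < x0 + real_of_int (m+1) * d" using fx[of "m+1"] by simp
    show ?thesis using A B m1 m2 lt by (simp add: algebra_simps abs_less_iff)
  qed
qed

lemma canon_Pplus:
  assumes "canonical_lift Pplus g"
  shows "(\<forall>s. - pi < g s - s \<and> g s \<le> s) \<and> g 0 = 0 \<and> g (pi/2) < pi/2"
proof -
  have g: "g \<in> SLtilde" using assms by (simp add: canonical_lift_def)
  obtain x0 where fx: "g x0 = x0" using assms by (auto simp: canonical_lift_def)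
  have QP: "Qf Pplus t = -((sin t)^2)" for t by (simp add: Qf_def Pplus_def vector_2)
  have LL: "lift_of Pplus g \<or> lift_of (- Pplus) g" using assms by (simp add: canonical_lift_def)
  have "Qf Pplus x0 = 0"
    using LL fixed_Q[of Pplus g x0] fixed_Q[of "- Pplus" g x0] fx Qf_neg[of Pplus x0] by auto
  then have s0: "sin x0 = 0" using QP by simp
  have L: "lift_of Pplus g"
  proof -
    have "\<not> lift_of (- Pplus) g"
    proof
      assume "lift_of (- Pplus) g"
      then show False by (rule no_neg[of Pplus g x0 1]) (simp_all add: fx Pplus_def vector_2 s0)
    qed
    then show ?thesis using LL by blast
  qed
  obtain i :: int where i: "x0 = real_of_int i * pi" using s0 sin_zero_iff_int2 by blast
  have fxj: "g (x0 + real_of_int j * pi) = x0 + real_of_int j * pi" for j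
    using slt_shift_int[OF g] fx by simp
  have nf: "\<bar>g s - s\<bar> < pi" for s by (rule near_fixed[OF g fxj]) auto
  have le: "g s \<le> s" for s
  proof (rule ccontr)
    assume "\<not> g s \<le> s"
    then have "sin (g s - s) > 0" using nf[of s] by (intro sin_gt_zero) auto
    moreover obtain k where "k > 0" "sin (g s - s) = k * Qf Pplus s" using lift_sinQ[OF L] by blast
    moreover have "k * (sin s)^2 \<ge> 0" using \<open>k > 0\<close> by simp
    ultimately show False using QP[of s] by simp
  qed
  have "g 0 = 0" using fxj[of "- i"] i by simp
  moreover have ne: "g (pi/2) \<noteq> pi/2"
  proof
    assume "g (pi/2) = pi/2"
    then have "sin (g (pi/2) - pi/2) = 0" by (metis diff_self sin_zero)
    moreover obtain k where "k > 0" "sin (g (pi/2) - pi/2) = k * Qf Pplus (pi/2)" using lift_sinQ[OF L] by blast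
    ultimately show False using QP[of "pi/2"] by simp
  qed
  moreover have "- pi < g s - s" for s using nf[of s] unfolding abs_less_iff by linarith
  moreover have "g (pi/2) < pi/2" using le[of "pi/2"] ne by linarith
  ultimately show ?thesis using le by (auto simp del: divide_const_simps)
qed

lemma canon_Pminus:
  assumes "canonical_lift Pminus g"
  shows "(\<forall>s. s \<le> g s \<and> g s - s < pi) \<and> g 0 = 0 \<and> g (pi/2) > pi/2"
proof -
  have g: "g \<in> SLtilde" using assms by (simp add: canonical_lift_def)
  obtain x0 where fx: "g x0 = x0" using assms by (auto simp: canonical_lift_def)
  have QP: "Qf Pminus t = (sin t)^2" for t by (simp add: Qf_def Pminus_def vector_2)
  have LL: "lift_of Pminus g \<or> lift_of (- Pminus) g" using assms by (simp add: canonical_lift_def)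
  have "Qf Pminus x0 = 0"
    using LL fixed_Q[of Pminus g x0] fixed_Q[of "- Pminus" g x0] fx Qf_neg[of Pminus x0] by auto
  then have s0: "sin x0 = 0" using QP by simp
  have L: "lift_of Pminus g"
  proof -
    have "\<not> lift_of (- Pminus) g"
    proof
      assume "lift_of (- Pminus) g"
      then show False by (rule no_neg[of Pminus g x0 1]) (simp_all add: fx Pminus_def vector_2 s0)
    qed
    then show ?thesis using LL by blast
  qed
  obtain i :: int where i: "x0 = real_of_int i * pi" using s0 sin_zero_iff_int2 by blast
  have fxj: "g (x0 + real_of_int j * pi) = x0 + real_of_int j * pi" for j
    using slt_shift_int[OF g] fx by simp
  have nf: "\<bar>g s - s\<bar> < pi" for s by (rule near_fixed[OF g fxj]) auto
  have le: "s \<le> g s" for s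
  proof (rule ccontr)
    assume "\<not> s \<le> g s"
    then have "sin (s - g s) > 0" using nf[of s] by (intro sin_gt_zero) auto
    then have "sin (g s - s) < 0" by (metis minus_diff_eq sin_minus neg_0_less_iff_less)
    moreover obtain k where "k > 0" "sin (g s - s) = k * Qf Pminus s" using lift_sinQ[OF L] by blast
    moreover have "k * (sin s)^2 \<ge> 0" using \<open>k > 0\<close> by simp
    ultimately show False using QP[of s] by simp
  qed
  have "g 0 = 0" using fxj[of "- i"] i by simp
  moreover have ne: "g (pi/2) \<noteq> pi/2"
  proof
    assume "g (pi/2) = pi/2"
    then have "sin (g (pi/2) - pi/2) = 0" by (metis diff_self sin_zero)
    moreover obtain k where "k > 0" "sin (g (pi/2) - pi/2) = k * Qf Pminus (pi/2)" using lift_sinQ[OF L] by blast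
    ultimately show False using QP[of "pi/2"] by simp
  qed
  moreover have "g s - s < pi" for s using nf[of s] unfolding abs_less_iff by linarith
  moreover have "g (pi/2) > pi/2" using le[of "pi/2"] ne by linarith
  ultimately show ?thesis using le by (auto simp del: divide_const_simps)
qed

lemma canon_H:
  assumes l: "l > 1" and cl: "canonical_lift (Hmat l) g"
  shows "(\<forall>s. \<bar>g s - s\<bar> < pi/2) \<and> g 0 = 0 \<and> g (pi/4) < pi/4 \<and> g (-pi/4) > -pi/4"
proof -
  have g: "g \<in> SLtilde" using cl by (simp add: canonical_lift_def)
  obtain x0 where fx: "g x0 = x0" using cl by (auto simp: canonical_lift_def)
  have QH: "Qf (Hmat l) t = (1/l - l) * (cos t * sin t)" for t by (simp add: Qf_def Hmat_def vector_2 algebra_simps)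
  have ln: "1/l - l < 0" using l by (simp add: field_simps) (smt (verit) mult_less_cancel_left1)
  have LL: "lift_of (Hmat l) g \<or> lift_of (- Hmat l) g" using cl by (simp add: canonical_lift_def)
  have "Qf (Hmat l) x0 = 0"
    using LL fixed_Q[of "Hmat l" g x0] fixed_Q[of "- Hmat l" g x0] fx Qf_neg[of "Hmat l" x0] by auto
  then have cs0: "cos x0 * sin x0 = 0" using QH ln by simp
  have L: "lift_of (Hmat l) g"
  proof -
    have "\<not> lift_of (- Hmat l) g"
    proof
      assume N: "lift_of (- Hmat l) g"
      show False
      proof (cases "sin x0 = 0")
        case True
        show False by (rule no_neg[OF N fx, of l]) (use l True in \<open>simp_all add: Hmat_def vector_2\<close>)
      next
        case False
        then have "cos x0 = 0" using cs0 by simp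
        then show False by (intro no_neg[OF N fx, of "1/l"]) (use l in \<open>simp_all add: Hmat_def vector_2\<close>)
      qed
    qed
    then show ?thesis using LL by blast
  qed
  have "sin (2 * x0) = 0" using cs0 by (auto simp: sin_double)
  then obtain i :: int where i: "2 * x0 = real_of_int i * pi" using sin_zero_iff_int2 by blast
  have fxj: "g (x0 + real_of_int j * pi) = x0 + real_of_int j * pi" for j
    using slt_shift_int[OF g] fx by simp
  have nf: "\<bar>g s - s\<bar> < pi" for s by (rule near_fixed[OF g fxj]) auto
  define y where "y = x0 + pi/2"
  have "cos y * sin y = - (cos x0 * sin x0)" by (simp add: y_def cos_add sin_add)
  then have "Qf (Hmat l) y = 0" using cs0 QH by simp
  then have "sin (g y - y) = 0" using lift_sinQ[OF L, of y] by auto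
  then obtain i2 :: int where i2: "g y - y = real_of_int i2 * pi" using sin_zero_iff_int2 by blast
  have "\<bar>real_of_int i2\<bar> * pi < 1 * pi" using nf[of y] i2 by (simp add: abs_mult)
  then have "\<bar>real_of_int i2\<bar> < 1" by (simp only: mult_less_cancel_right) simp
  then have "i2 = 0" by linarith
  then have fy: "g y = y" using i2 by simp
  have fyj: "g (y + real_of_int j * pi) = y + real_of_int j * pi" for j
    using slt_shift_int[OF g] fy by simp
  have fxh: "g (x0 + real_of_int j * (pi/2)) = x0 + real_of_int j * (pi/2)" for j
  proof -
    have j: "j = 2 * (j div 2) + j mod 2" by simp
    have "j mod 2 = 0 \<or> j mod 2 = 1" by presburger
    then show ?thesis
    proof
      assume "j mod 2 = 0"
      then have "x0 + real_of_int j * (pi/2) = x0 + real_of_int (j div 2) * pi"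
        by (subst j) (simp add: algebra_simps)
      then show ?thesis using fxj by simp
    next
      assume "j mod 2 = 1"
      then have "x0 + real_of_int j * (pi/2) = y + real_of_int (j div 2) * pi"
        unfolding y_def by (subst j) (simp add: algebra_simps)
      then show ?thesis using fyj by simp
    qed
  qed
  have nf2: "\<bar>g s - s\<bar> < pi/2" for s by (rule near_fixed[OF g fxh]) auto
  have "g 0 = 0" using fxh[of "- i"] i by (simp add: field_simps)
  moreover have "g (pi/4) < pi/4"
  proof (rule ccontr)
    assume a: "\<not> g (pi/4) < pi/4"
    have s0: "sin (g (pi/4) - pi/4) \<ge> 0" using a nf2[of "pi/4"] by (intro sin_ge_zero) auto
    obtain k where k: "k > 0" "sin (g (pi/4) - pi/4) = k * Qf (Hmat l) (pi/4)" using lift_sinQ[OF L] by blast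
    have "cos (pi/4) * sin (pi/4) > 0" by (simp add: cos_45 sin_45)
    then have q: "(1/l - l) * (cos (pi/4) * sin (pi/4)) < 0" by (rule mult_neg_pos[OF ln])
    have "sin (g (pi/4) - pi/4) = k * ((1/l - l) * (cos (pi/4) * sin (pi/4)))" using k QH by simp
    then show False using mult_pos_neg[OF k(1) q] s0 by linarith
  qed
  moreover have "g (-pi/4) > -pi/4"
  proof (rule ccontr)
    assume a: "\<not> g (-pi/4) > -pi/4"
    have "sin (-pi/4 - g (-pi/4)) \<ge> 0" using a nf2[of "-pi/4"] by (intro sin_ge_zero) auto
    then have s0: "sin (g (-pi/4) - -pi/4) \<le> 0" by (metis minus_diff_eq sin_minus neg_0_le_iff_le)
    obtain k where k: "k > 0" "sin (g (-pi/4) - -pi/4) = k * Qf (Hmat l) (-pi/4)" using lift_sinQ[OF L] by blast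
    have "cos (-pi/4) * sin (-pi/4) < 0" by (simp add: cos_45 sin_45)
    then have q: "(1/l - l) * (cos (-pi/4) * sin (-pi/4)) > 0" by (rule mult_neg_neg[OF ln])
    have "sin (g (-pi/4) - -pi/4) = k * ((1/l - l) * (cos (-pi/4) * sin (-pi/4)))" using k QH by simp
    then show False using mult_pos_pos[OF k(1) q] s0 by linarith
  qed
  ultimately show ?thesis using nf2 by blast
qed

lemma lt_cancel_pi: "x * pi < y * pi \<Longrightarrow> x < y"
  by (simp add: mult_less_cancel_right)

lemma wind_int: "winding a (a + real k * pi) = real k"
proof -
  have "(THE k'::nat. a + real k * pi = a + real k' * pi) = k"
    by (rule the_equality) auto
  then show ?thesis unfolding winding_def by auto
qed

lemma wind_half:
  assumes k: "a + real k * pi < b" "b < a + real (k+1) * pi"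
  shows "winding a b = real k + 1/2"
proof -
  have ne: "\<not> (\<exists>k'::nat. b = a + real k' * pi)"
  proof
    assume "\<exists>k'::nat. b = a + real k' * pi"
    then obtain k' :: nat where b: "b = a + real k' * pi" by blast
    have "real k * pi < real k' * pi" "real k' * pi < real (k+1) * pi" using k b by auto
    then have "real k < real k'" "real k' < real (k+1)" by (auto dest: lt_cancel_pi)
    then show False by simp
  qed
  have "(THE j::nat. a + real j * pi < b \<and> b < a + real (j + 1) * pi) = k"
  proof (rule the_equality)
    fix j :: nat assume j: "a + real j * pi < b \<and> b < a + real (j + 1) * pi"
    have "real k * pi < real (j+1) * pi" "real j * pi < real (k+1) * pi" using k j by linarith+
    then have "real k < real (j+1)" "real j < real (k+1)" by (auto dest: lt_cancel_pi)
    then show "j = k" by simp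
  qed (use k in auto)
  then show ?thesis unfolding winding_def using ne by simp
qed

lemma half_notin: "real n + 1/2 \<notin> \<int>"
proof
  assume "real n + 1/2 \<in> \<int>"
  then obtain z where z: "real n + 1/2 = real_of_int z" by (metis Ints_cases)
  then have "real_of_int (2 * z) = real_of_int (2 * int n + 1)" by simp
  then have "2 * z = 2 * int n + 1" by (simp only: of_int_eq_iff)
  then show False by presburger
qed

lemma wind_Ints:
  assumes "a < b"
  shows "winding a b \<in> \<int> \<longleftrightarrow> (\<exists>k::nat. b = a + real k * pi)"
proof
  assume w: "winding a b \<in> \<int>"
  show "\<exists>k::nat. b = a + real k * pi"
  proof (rule ccontr)
    assume "\<not> ?thesis"
    then have "winding a b = real (THE k::nat. a + real k * pi < b \<and> b < a + real (k + 1) * pi) + 1/2"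
      unfolding winding_def by simp
    then show False using w half_notin by metis
  qed
next
  assume "\<exists>k::nat. b = a + real k * pi"
  then obtain k :: nat where "b = a + real k * pi" by blast
  then show "winding a b \<in> \<int>" using wind_int by simp
qed

lemma tr_int: "h \<in> SLtilde \<Longrightarrow> winding (h x) (h (x + real k * pi)) = real k"
  using slt_shift_nat[of h x k] wind_int by simp

lemma tr_half: "h \<in> SLtilde \<Longrightarrow> x + real k * pi < y \<Longrightarrow> y < x + real (k+1) * pi
   \<Longrightarrow> winding (h x) (h y) = real k + 1/2"
  using slt_between[of h x k y] wind_half by blast

lemma slt_mono:
  assumes h: "h \<in> SLtilde" and xy: "x < y"
  shows "h x < h y"
proof -
  define k where "k = nat \<lfloor>(y - x) / pi\<rfloor>"
  have "0 \<le> (y - x) / pi" using xy by simp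
  then have k0: "real k = of_int \<lfloor>(y - x) / pi\<rfloor>" unfolding k_def by simp
  have "real k \<le> (y - x) / pi" using k0 by simp
  then have k1: "x + real k * pi \<le> y" by (simp add: field_simps)
  have "(y - x) / pi < real k + 1" using k0 by linarith
  then have k2: "y < x + real (k+1) * pi" by (simp add: field_simps)
  show ?thesis
  proof (cases "y = x + real k * pi")
    case True
    have "k \<noteq> 0"
    proof
      assume "k = 0" then show False using True xy by simp
    qed
    then show ?thesis using True slt_shift_nat[OF h, of x k] by simp
  next
    case False
    then have "h x + real k * pi < h y" using slt_between[OF h _ k2] k1 by simp
    then show ?thesis by (smt (verit) of_nat_0_le_iff pi_gt_zero mult_nonneg_nonneg)
  qed
qed

lemma conj_pt:
  assumes "conjugate f G"
  shows "\<exists>h\<in>SLtilde. (\<forall>x. f (h x) = h (G x)) \<and> (\<forall>a. \<exists>x. a = h x)"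
proof -
  obtain h where h: "h \<in> SLtilde" "f = h \<circ> G \<circ> inv h" using assms by (auto simp: conjugate_def)
  have b: "bij h" using slt_bij[OF h(1)] .
  have "f (h x) = h (G x)" for x using h(2) bij_is_inj[OF b] by simp
  moreover have "\<exists>x. a = h x" for a using b by (metis bij_inv_eq_iff)
  ultimately show ?thesis using h(1) by blast
qed

lemma rp_fixed_Q: "rp_fixed M a \<longleftrightarrow> Qf M a = 0"
proof -
  define u where "u = M$1$1 * cos a + M$1$2 * sin a"
  define v where "v = M$2$1 * cos a + M$2$2 * sin a"
  have Q: "Qf M a = v * cos a - u * sin a" by (simp add: Qf_def u_def v_def algebra_simps power2_eq_square)
  have R: "rp_fixed M a \<longleftrightarrow> (\<exists>c. u = c * cos a \<and> v = c * sin a)"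
    by (simp add: rp_fixed_def vec_eq_iff forall_2 mv_comp u_def v_def)
  have sc: "(sin a)^2 + (cos a)^2 = 1" by simp
  show ?thesis
  proof
    assume "rp_fixed M a"
    then obtain c where "u = c * cos a" "v = c * sin a" using R by blast
    then show "Qf M a = 0" using Q by simp
  next
    assume "Qf M a = 0"
    then have e: "v * cos a = u * sin a" using Q by simp
    have "u = (u * cos a + v * sin a) * cos a"
    proof -
      have "(u * cos a + v * sin a) * cos a = u * (cos a)^2 + (v * cos a) * sin a" by (simp add: algebra_simps power2_eq_square)
      also have "\<dots> = u * (cos a)^2 + (u * sin a) * sin a" using e by simp
      also have "\<dots> = u * ((sin a)^2 + (cos a)^2)" by algebra
      also have "\<dots> = u" using sc by simp
      finally show ?thesis by simp
    qed
    moreover have "v = (u * cos a + v * sin a) * sin a"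
    proof -
      have "(u * cos a + v * sin a) * sin a = (u * sin a) * cos a + v * (sin a)^2" by (simp add: algebra_simps power2_eq_square)
      also have "\<dots> = (v * cos a) * cos a + v * (sin a)^2" using e by simp
      also have "\<dots> = v * ((sin a)^2 + (cos a)^2)" by algebra
      also have "\<dots> = v" using sc by simp
      finally show ?thesis by simp
    qed
    ultimately show "rp_fixed M a" using R by blast
  qed
qed

lemma part5:
  assumes L: "lift_of M f" and af: "a < f a"
  shows "winding a (f a) \<in> \<int> \<longleftrightarrow> rp_fixed M a"
proof -
  obtain k where k: "k > 0" "sin (f a - a) = k * Qf M a" using lift_sinQ[OF L] by blast
  have "(\<exists>k::nat. f a = a + real k * pi) \<longleftrightarrow> sin (f a - a) = 0"
  proof
    assume "\<exists>k::nat. f a = a + real k * pi"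
    then obtain j :: nat where "f a = a + real j * pi" by blast
    then show "sin (f a - a) = 0" by (simp add: sin_npi)
  next
    assume "sin (f a - a) = 0"
    then obtain i :: int where i: "f a - a = real_of_int i * pi" using sin_zero_iff_int2 by blast
    have "real_of_int i * pi > 0" using i af by simp
    then have "i > 0" by (simp add: zero_less_mult_iff)
    then have "f a = a + real (nat i) * pi" using i by simp
    then show "\<exists>k::nat. f a = a + real k * pi" by blast
  qed
  also have "\<dots> \<longleftrightarrow> Qf M a = 0" using k by simp
  finally show ?thesis using wind_Ints[OF af] rp_fixed_Q by simp
qed

lemma conjG:
  assumes "conjugate f (g \<circ> Etr (real n * pi))" "g \<in> SLtilde"
  shows "\<exists>h\<in>SLtilde. (\<forall>x. f (h x) = h (g x + real n * pi)) \<and> (\<forall>a. \<exists>x. a = h x)"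
proof -
  obtain h where h: "h \<in> SLtilde" "\<forall>x. f (h x) = h ((g \<circ> Etr (real n * pi)) x)" "\<forall>a. \<exists>x. a = h x"
    using conj_pt[OF assms(1)] by blast
  have "(g \<circ> Etr (real n * pi)) x = g x + real n * pi" for x
    using slt_shift_nat[OF assms(2)] by (simp add: Etr_def)
  then show ?thesis using h by auto
qed

lemma Wn: "h \<in> SLtilde \<Longrightarrow> f (h x) = h (g x + real n * pi) \<Longrightarrow> g x = x \<Longrightarrow> winding (h x) (f (h x)) = real n"
  using tr_int[of h x n] by simp

lemma Wlo: assumes "h \<in> SLtilde" "f (h x) = h (g x + real n * pi)" "g x < x" "x - pi/2 < g x \<or> x - pi < g x" "n \<ge> 1"
  shows "winding (h x) (f (h x)) = real n - 1/2"
proof -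
  have "x + real (n-1) * pi < g x + real n * pi" "g x + real n * pi < x + real (n - 1 + 1) * pi"
    using assms(3-5) pi_gt_zero by (auto simp: of_nat_diff algebra_simps)
  then have "winding (h x) (h (g x + real n * pi)) = real (n-1) + 1/2" using tr_half[OF assms(1)] by blast
  then show ?thesis using assms(2,5) by (simp add: of_nat_diff)
qed

lemma Whi: assumes "h \<in> SLtilde" "f (h x) = h (g x + real n * pi)" "x < g x" "g x < x + pi"
  shows "winding (h x) (f (h x)) = real n + 1/2"
proof -
  have "x + real n * pi < g x + real n * pi" "g x + real n * pi < x + real (n + 1) * pi"
    using assms(3-4) pi_gt_zero by (auto simp: algebra_simps)
  then show ?thesis using tr_half[OF assms(1)] assms(2) by simp
qed

lemma pos_case:
  assumes "h \<in> SLtilde" "\<forall>x. f (h x) = h (g x + real n * pi)" "\<forall>a. \<exists>x. a = h x"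
    "\<forall>x. x < g x + real n * pi"
  shows "a < f a"
  using assms slt_mono by metis

theorem mainTheorem13:
  fixes f :: "real \<Rightarrow> real"
  assumes "f \<in> SLtilde"
  shows
   "(\<forall>\<alpha>>0. conjugate f (Etr \<alpha>) \<longrightarrow>
        (\<forall>a. (\<forall>n::nat. winding a (f a) = real n \<longleftrightarrow> \<alpha> = real n * pi) \<and>
             (\<forall>n::nat. real n * pi < \<alpha> \<and> \<alpha> < real (n + 1) * pi \<longrightarrow>
                winding a (f a) = real n + 1/2)))
    \<and> (\<forall>n::nat. n \<ge> 1 \<longrightarrow>
        (\<exists>g. canonical_lift Pplus g \<and> conjugate f (g \<circ> Etr (real n * pi))) \<longrightarrow>
          (\<forall>a. real n - 1/2 \<le> winding a (f a) \<and> winding a (f a) \<le> real n) \<and>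
          (\<exists>a. winding a (f a) = real n - 1/2) \<and> (\<exists>a. winding a (f a) = real n))
    \<and> (\<forall>n::nat. n \<ge> 1 \<longrightarrow>
        (\<exists>g. canonical_lift Pminus g \<and> conjugate f (g \<circ> Etr (real n * pi))) \<longrightarrow>
          (\<forall>a. real n \<le> winding a (f a) \<and> winding a (f a) \<le> real n + 1/2) \<and>
          (\<exists>a. winding a (f a) = real n) \<and> (\<exists>a. winding a (f a) = real n + 1/2))
    \<and> (\<forall>l>1. \<forall>n::nat. n \<ge> 1 \<longrightarrow>
        (\<exists>g. canonical_lift (Hmat l) g \<and> conjugate f (g \<circ> Etr (real n * pi))) \<longrightarrow>
          (\<forall>a. real n - 1/2 \<le> winding a (f a) \<and> winding a (f a) \<le> real n + 1/2) \<and>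
          (\<exists>a. winding a (f a) = real n - 1/2) \<and> (\<exists>a. winding a (f a) = real n + 1/2))
    \<and> ((\<exists>n::nat. n \<ge> 1 \<and>
          ((\<exists>g. canonical_lift Pplus g \<and> conjugate f (g \<circ> Etr (real n * pi))) \<or>
           (\<exists>g. canonical_lift Pminus g \<and> conjugate f (g \<circ> Etr (real n * pi))) \<or>
           (\<exists>l>1. \<exists>g. canonical_lift (Hmat l) g \<and> conjugate f (g \<circ> Etr (real n * pi))))) \<longrightarrow>
        (\<forall>a M. lift_of M f \<longrightarrow> (winding a (f a) \<in> \<int> \<longleftrightarrow> rp_fixed M a)))"
proof -
  have P1: "\<forall>\<alpha>>0. conjugate f (Etr \<alpha>) \<longrightarrow>
        (\<forall>a. (\<forall>n::nat. winding a (f a) = real n \<longleftrightarrow> \<alpha> = real n * pi) \<and>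
             (\<forall>n::nat. real n * pi < \<alpha> \<and> \<alpha> < real (n + 1) * pi \<longrightarrow>
                winding a (f a) = real n + 1/2))"
  proof (intro allI impI)
    fix \<alpha> a assume \<alpha>: "\<alpha> > 0" and c: "conjugate f (Etr \<alpha>)"
    obtain h where h: "h \<in> SLtilde" "\<forall>x. f (h x) = h (Etr \<alpha> x)" "\<forall>a. \<exists>x. a = h x"
      using conj_pt[OF c] by blast
    obtain x where x: "a = h x" using h(3) by blast
    have fa: "f a = h (x + \<alpha>)" using h(2) x by (simp add: Etr_def)
    define k where "k = nat \<lfloor>\<alpha> / pi\<rfloor>"
    have "0 \<le> \<alpha> / pi" using \<alpha> by simp
    then have k0: "real k = of_int \<lfloor>\<alpha> / pi\<rfloor>" unfolding k_def by simp
    have "real k \<le> \<alpha> / pi" using k0 by simp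
    then have k1: "real k * pi \<le> \<alpha>" by (simp add: field_simps)
    have "\<alpha> / pi < real k + 1" using k0 by linarith
    then have k2: "\<alpha> < real (k+1) * pi" by (simp add: field_simps)
    have A: "\<forall>n::nat. winding a (f a) = real n \<longleftrightarrow> \<alpha> = real n * pi"
    proof (cases "\<alpha> = real k * pi")
      case True
      then have w: "winding a (f a) = real k" using fa x tr_int[OF h(1)] by simp
      show ?thesis
      proof
        fix n :: nat
        have "real k * pi = real n * pi \<longleftrightarrow> k = n" by simp
        then show "winding a (f a) = real n \<longleftrightarrow> \<alpha> = real n * pi" using w True by simp
      qed
    next
      case False
      then have "real k * pi < \<alpha>" using k1 by simp
      then have w: "winding a (f a) = real k + 1/2"
        using tr_half[OF h(1), of x k "x + \<alpha>"] k2 fa x by simp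
      show ?thesis
      proof
        fix n :: nat
        have "winding a (f a) \<noteq> real n" using w half_notin[of k] by (metis Ints_of_nat)
        moreover have "\<alpha> \<noteq> real n * pi"
        proof
          assume e: "\<alpha> = real n * pi"
          have "real k * pi < real n * pi" "real n * pi < real (k+1) * pi"
            using \<open>real k * pi < \<alpha>\<close> k2 e by auto
          then have "real k < real n" "real n < real (k+1)" by (auto dest: lt_cancel_pi)
          then show False by simp
        qed
        ultimately show "winding a (f a) = real n \<longleftrightarrow> \<alpha> = real n * pi" by simp
      qed
    qed
    have B: "\<forall>n::nat. real n * pi < \<alpha> \<and> \<alpha> < real (n + 1) * pi \<longrightarrow> winding a (f a) = real n + 1/2"
      using tr_half[OF h(1), of x _ "x + \<alpha>"] fa x by auto
    show "(\<forall>n::nat. winding a (f a) = real n \<longleftrightarrow> \<alpha> = real n * pi) \<and>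
             (\<forall>n::nat. real n * pi < \<alpha> \<and> \<alpha> < real (n + 1) * pi \<longrightarrow>
                winding a (f a) = real n + 1/2)" using A B by blast
  qed
  have P2: "\<forall>n::nat. n \<ge> 1 \<longrightarrow>
        (\<exists>g. canonical_lift Pplus g \<and> conjugate f (g \<circ> Etr (real n * pi))) \<longrightarrow>
          (\<forall>a. real n - 1/2 \<le> winding a (f a) \<and> winding a (f a) \<le> real n) \<and>
          (\<exists>a. winding a (f a) = real n - 1/2) \<and> (\<exists>a. winding a (f a) = real n)"
  proof (intro allI impI)
    fix n :: nat assume n: "n \<ge> 1" and "\<exists>g. canonical_lift Pplus g \<and> conjugate f (g \<circ> Etr (real n * pi))"
    then obtain g where g: "canonical_lift Pplus g" "conjugate f (g \<circ> Etr (real n * pi))" by blast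
    have gs: "g \<in> SLtilde" using g(1) by (simp add: canonical_lift_def)
    obtain h where h: "h \<in> SLtilde" "\<forall>x. f (h x) = h (g x + real n * pi)" "\<forall>a. \<exists>x. a = h x"
      using conjG[OF g(2) gs] by blast
    note C = canon_Pplus[OF g(1)]
    have W: "winding (h x) (f (h x)) = real n \<or> winding (h x) (f (h x)) = real n - 1/2" for x
    proof (cases "g x = x")
      case True then show ?thesis using Wn[of h f x g n, OF h(1) h(2)[rule_format, of x]] by simp
    next
      case False then have "g x < x" using C[THEN conjunct1, rule_format, of x] by linarith
      moreover have "x - pi/2 < g x \<or> x - pi < g x" using C[THEN conjunct1, rule_format, of x] by simp
      ultimately show ?thesis using Wlo[of h f x g n, OF h(1) h(2)[rule_format, of x] _ _ n] by simp
    qed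
    have "\<forall>a. real n - 1/2 \<le> winding a (f a) \<and> winding a (f a) \<le> real n"
    proof
      fix a obtain x where "a = h x" using h(3) by blast
      then show "real n - 1/2 \<le> winding a (f a) \<and> winding a (f a) \<le> real n" using W[of x] by auto
    qed
    moreover have "winding (h (pi/2)) (f (h (pi/2))) = real n - 1/2"
    proof -
      have "pi/2 - pi < g (pi/2)" using C[THEN conjunct1, rule_format, of "pi/2"] by simp
      then show ?thesis using Wlo[of h f "pi/2" g n, OF h(1) h(2)[rule_format, of "pi/2"] _ _ n] C by simp
    qed
    moreover have "winding (h 0) (f (h 0)) = real n"
      using Wn[of h f 0 g n, OF h(1) h(2)[rule_format, of 0]] C by simp
    ultimately show "(\<forall>a. real n - 1/2 \<le> winding a (f a) \<and> winding a (f a) \<le> real n) \<and>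
          (\<exists>a. winding a (f a) = real n - 1/2) \<and> (\<exists>a. winding a (f a) = real n)" by blast
  qed
  have P3: "\<forall>n::nat. n \<ge> 1 \<longrightarrow>
        (\<exists>g. canonical_lift Pminus g \<and> conjugate f (g \<circ> Etr (real n * pi))) \<longrightarrow>
          (\<forall>a. real n \<le> winding a (f a) \<and> winding a (f a) \<le> real n + 1/2) \<and>
          (\<exists>a. winding a (f a) = real n) \<and> (\<exists>a. winding a (f a) = real n + 1/2)"
  proof (intro allI impI)
    fix n :: nat assume n: "n \<ge> 1" and "\<exists>g. canonical_lift Pminus g \<and> conjugate f (g \<circ> Etr (real n * pi))"
    then obtain g where g: "canonical_lift Pminus g" "conjugate f (g \<circ> Etr (real n * pi))" by blast
    have gs: "g \<in> SLtilde" using g(1) by (simp add: canonical_lift_def)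
    obtain h where h: "h \<in> SLtilde" "\<forall>x. f (h x) = h (g x + real n * pi)" "\<forall>a. \<exists>x. a = h x"
      using conjG[OF g(2) gs] by blast
    note C = canon_Pminus[OF g(1)]
    have W: "winding (h x) (f (h x)) = real n \<or> winding (h x) (f (h x)) = real n + 1/2" for x
    proof (cases "g x = x")
      case True then show ?thesis using Wn[OF h(1)] h(2) by blast
    next
      case False then have "x < g x" using C[THEN conjunct1, rule_format, of x] by linarith
      moreover have "g x < x + pi" using C[THEN conjunct1, rule_format, of x] by simp
      ultimately show ?thesis using Whi[of h f x g n, OF h(1) h(2)[rule_format, of x]] by simp
    qed
    have "\<forall>a. real n \<le> winding a (f a) \<and> winding a (f a) \<le> real n + 1/2"
    proof
      fix a obtain x where "a = h x" using h(3) by blast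
      then show "real n \<le> winding a (f a) \<and> winding a (f a) \<le> real n + 1/2" using W[of x] by auto
    qed
    moreover have "winding (h (pi/2)) (f (h (pi/2))) = real n + 1/2"
    proof -
      have "g (pi/2) < pi/2 + pi" using C[THEN conjunct1, rule_format, of "pi/2"] by simp
      then show ?thesis using Whi[of h f "pi/2" g n, OF h(1) h(2)[rule_format, of "pi/2"]] C by simp
    qed
    moreover have "winding (h 0) (f (h 0)) = real n"
      using Wn[of h f 0 g n, OF h(1) h(2)[rule_format, of 0]] C by simp
    ultimately show "(\<forall>a. real n \<le> winding a (f a) \<and> winding a (f a) \<le> real n + 1/2) \<and>
          (\<exists>a. winding a (f a) = real n) \<and> (\<exists>a. winding a (f a) = real n + 1/2)" by blast
  qed
  have P4: "\<forall>l>1. \<forall>n::nat. n \<ge> 1 \<longrightarrow>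
        (\<exists>g. canonical_lift (Hmat l) g \<and> conjugate f (g \<circ> Etr (real n * pi))) \<longrightarrow>
          (\<forall>a. real n - 1/2 \<le> winding a (f a) \<and> winding a (f a) \<le> real n + 1/2) \<and>
          (\<exists>a. winding a (f a) = real n - 1/2) \<and> (\<exists>a. winding a (f a) = real n + 1/2)"
  proof (intro allI impI)
    fix l :: real and n :: nat assume l: "l > 1" and n: "n \<ge> 1" and "\<exists>g. canonical_lift (Hmat l) g \<and> conjugate f (g \<circ> Etr (real n * pi))"
    then obtain g where g: "canonical_lift (Hmat l) g" "conjugate f (g \<circ> Etr (real n * pi))" by blast
    have gs: "g \<in> SLtilde" using g(1) by (simp add: canonical_lift_def)
    obtain h where h: "h \<in> SLtilde" "\<forall>x. f (h x) = h (g x + real n * pi)" "\<forall>a. \<exists>x. a = h x"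
      using conjG[OF g(2) gs] by blast
    note C = canon_H[OF l g(1)]
    have W: "real n - 1/2 \<le> winding (h x) (f (h x)) \<and> winding (h x) (f (h x)) \<le> real n + 1/2" for x
    proof -
      have b: "x - pi/2 < g x" "g x < x + pi" using C[THEN conjunct1, rule_format, of x] pi_gt_zero
        unfolding abs_less_iff by linarith+
      consider "g x = x" | "g x < x" | "x < g x" by linarith
      then show ?thesis
      proof cases
        case 1 then show ?thesis using Wn[of h f x g n, OF h(1) h(2)[rule_format, of x]] by simp
      next
        case 2 then show ?thesis using Wlo[of h f x g n, OF h(1) h(2)[rule_format, of x] _ _ n] b by simp
      next
        case 3 then show ?thesis using Whi[of h f x g n, OF h(1) h(2)[rule_format, of x]] b by simp
      qed
    qed
    have "\<forall>a. real n - 1/2 \<le> winding a (f a) \<and> winding a (f a) \<le> real n + 1/2"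
    proof
      fix a obtain x where "a = h x" using h(3) by blast
      then show "real n - 1/2 \<le> winding a (f a) \<and> winding a (f a) \<le> real n + 1/2" using W[of x] by auto
    qed
    moreover have "winding (h (pi/4)) (f (h (pi/4))) = real n - 1/2"
    proof -
      have "pi/4 - pi/2 < g (pi/4)" using C[THEN conjunct1, rule_format, of "pi/4"] unfolding abs_less_iff by linarith
      then show ?thesis using Wlo[of h f "pi/4" g n, OF h(1) h(2)[rule_format, of "pi/4"] _ _ n] C by simp
    qed
    moreover have "winding (h (-pi/4)) (f (h (-pi/4))) = real n + 1/2"
    proof -
      have "g (-pi/4) < -pi/4 + pi" using C[THEN conjunct1, rule_format, of "-pi/4"] pi_gt_zero unfolding abs_less_iff by linarith
      then show ?thesis using Whi[of h f "-pi/4" g n, OF h(1) h(2)[rule_format, of "-pi/4"]] C by simp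
    qed
    ultimately show "(\<forall>a. real n - 1/2 \<le> winding a (f a) \<and> winding a (f a) \<le> real n + 1/2) \<and>
          (\<exists>a. winding a (f a) = real n - 1/2) \<and> (\<exists>a. winding a (f a) = real n + 1/2)" by blast
  qed
  have P5: "(\<exists>n::nat. n \<ge> 1 \<and>
          ((\<exists>g. canonical_lift Pplus g \<and> conjugate f (g \<circ> Etr (real n * pi))) \<or>
           (\<exists>g. canonical_lift Pminus g \<and> conjugate f (g \<circ> Etr (real n * pi))) \<or>
           (\<exists>l>1. \<exists>g. canonical_lift (Hmat l) g \<and> conjugate f (g \<circ> Etr (real n * pi))))) \<longrightarrow>
        (\<forall>a M. lift_of M f \<longrightarrow> (winding a (f a) \<in> \<int> \<longleftrightarrow> rp_fixed M a))"
  proof (intro impI allI)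
    fix a M assume ex: "\<exists>n::nat. n \<ge> 1 \<and>
          ((\<exists>g. canonical_lift Pplus g \<and> conjugate f (g \<circ> Etr (real n * pi))) \<or>
           (\<exists>g. canonical_lift Pminus g \<and> conjugate f (g \<circ> Etr (real n * pi))) \<or>
           (\<exists>l>1. \<exists>g. canonical_lift (Hmat l) g \<and> conjugate f (g \<circ> Etr (real n * pi))))"
      and L: "lift_of M f"
    obtain n :: nat where n: "n \<ge> 1" and cases: "(\<exists>g. canonical_lift Pplus g \<and> conjugate f (g \<circ> Etr (real n * pi))) \<or>
           (\<exists>g. canonical_lift Pminus g \<and> conjugate f (g \<circ> Etr (real n * pi))) \<or>
           (\<exists>l>1. \<exists>g. canonical_lift (Hmat l) g \<and> conjugate f (g \<circ> Etr (real n * pi)))" using ex by blast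
    have npi: "real n * pi \<ge> pi" using n pi_gt_zero by simp
    have "a < f a"
      using cases
    proof (elim disjE exE conjE)
      fix g assume g: "canonical_lift Pplus g" "conjugate f (g \<circ> Etr (real n * pi))"
      have gs: "g \<in> SLtilde" using g(1) by (simp add: canonical_lift_def)
      obtain h where h: "h \<in> SLtilde" "\<forall>x. f (h x) = h (g x + real n * pi)" "\<forall>a. \<exists>x. a = h x"
        using conjG[OF g(2) gs] by blast
      have "x < g x + real n * pi" for x using canon_Pplus[OF g(1), THEN conjunct1, rule_format, of x] npi by linarith
      then show ?thesis using pos_case[OF h] by blast
    next
      fix g assume g: "canonical_lift Pminus g" "conjugate f (g \<circ> Etr (real n * pi))"
      have gs: "g \<in> SLtilde" using g(1) by (simp add: canonical_lift_def)
      obtain h where h: "h \<in> SLtilde" "\<forall>x. f (h x) = h (g x + real n * pi)" "\<forall>a. \<exists>x. a = h x"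
        using conjG[OF g(2) gs] by blast
      have "x < g x + real n * pi" for x using canon_Pminus[OF g(1), THEN conjunct1, rule_format, of x] npi pi_gt_zero by linarith
      then show ?thesis using pos_case[OF h] by blast
    next
      fix l g assume l: "l > 1" and g: "canonical_lift (Hmat l) g" "conjugate f (g \<circ> Etr (real n * pi))"
      have gs: "g \<in> SLtilde" using g(1) by (simp add: canonical_lift_def)
      obtain h where h: "h \<in> SLtilde" "\<forall>x. f (h x) = h (g x + real n * pi)" "\<forall>a. \<exists>x. a = h x"
        using conjG[OF g(2) gs] by blast
      have "x < g x + real n * pi" for x
        using canon_H[OF l g(1), THEN conjunct1, rule_format, of x] npi pi_gt_zero
        unfolding abs_less_iff by linarith
      then show ?thesis using pos_case[OF h] by blast
    qed
    then show "winding a (f a) \<in> \<int> \<longleftrightarrow> rp_fixed M a" by (rule part5[OF L])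
  qed
  show ?thesis using P1 P2 P3 P4 P5 by (intro conjI) assumption+
qed

end
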